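(* Let $a$ and $b$ be positive integers and let $d$ be the largest practical number dividing $\gcd(a,b)$. Consider the numbers $an+b$ with $n$ ranging over the nonnegative integers. Then: (a) If there exists a prime $p\le \sigma(d)+1$ such that $p\nmid \frac{a}{d}$, then there are infinitely many practical numbers of the form $an+b$. (b) If $b$ is a practical number and every prime $p\le\sigma(d)+1$ divides $\frac{a}{d}$, then there is exactly one practical number of the form $an+b$ (namely $b$). (c) If $b$ is not a practical number and every prime $p\le\sigma(d)+1$ divides $\frac{a}{d}$, then there are no practical numbers of the form $an+b$.
   Context: A positive integer $N$ is called a practical number if every integer in $[1,N]$ can be expressed as a sum of distinct positive divisors of $N$. $\sigma(N)$ denotes the sum of the positive divisors of $N$. *)

theory Defs
  imports "HOL-Number_Theory.Number_Theory"
begin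

definition divisors_of :: "nat \<Rightarrow> nat set" where
  "divisors_of N = {k. k dvd N \<and> k > 0}"

definition sigma :: "nat \<Rightarrow> nat" where
  "sigma N = (\<Sum>k\<in>divisors_of N. k)"

definition practical :: "nat \<Rightarrow> bool" where
  "practical N \<longleftrightarrow> N > 0 \<and>
     (\<forall>m\<in>{1..N}. \<exists>S. S \<subseteq> divisors_of N \<and> (\<Sum>k\<in>S. k) = m)"

definition largest_practical_dvd :: "nat \<Rightarrow> nat" where
  "largest_practical_dvd n = (GREATEST d. practical d \<and> d dvd n)"

end

theory Submission
  imports Defs
begin


lemma complete_set:
  fixes A :: "nat set"
  assumes "finite A"
  shows "(\<forall>a\<in>A. a \<le> 1 + (\<Sum>b\<in>{b\<in>A. b<a}. b)) \<longrightarrow> (\<forall>k \<le> (\<Sum>a\<in>A. a). \<exists>S\<subseteq>A. (\<Sum>s\<in>S. s) = k)"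
  using assms
proof (induct A rule: finite_linorder_max_induct)
  case empty
  then show ?case by auto
next
  case (insert b A)
  show ?case
  proof (intro impI allI)
    fix k assume H: "\<forall>a\<in>insert b A. a \<le> 1 + (\<Sum>c\<in>{c\<in>insert b A. c<a}. c)"
      and k: "k \<le> (\<Sum>a\<in>insert b A. a)"
    have bA: "b \<notin> A" using insert(2) by auto
    have HA: "\<forall>a\<in>A. a \<le> 1 + (\<Sum>c\<in>{c\<in>A. c<a}. c)"
    proof
      fix a assume a: "a \<in> A"
      have "{c\<in>insert b A. c<a} = {c\<in>A. c<a}" using insert(2) a by auto
      then show "a \<le> 1 + (\<Sum>c\<in>{c\<in>A. c<a}. c)" using H a by auto
    qed
    have "{c\<in>insert b A. c<b} = A" using insert(2) by auto
    then have hb: "b \<le> 1 + (\<Sum>a\<in>A. a)" using H by auto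
    have ks: "k \<le> b + (\<Sum>a\<in>A. a)" using k insert(1) bA by simp
    show "\<exists>S\<subseteq>insert b A. (\<Sum>s\<in>S. s) = k"
    proof (cases "k \<le> (\<Sum>a\<in>A. a)")
      case True
      then obtain S where "S \<subseteq> A" "(\<Sum>s\<in>S. s) = k" using insert(3) HA by blast
      then show ?thesis by blast
    next
      case False
      then have "k - b \<le> (\<Sum>a\<in>A. a)" using ks by arith
      then obtain S where S: "S \<subseteq> A" "(\<Sum>s\<in>S. s) = k - b" using insert(3) HA by blast
      have fS: "finite S" using S(1) insert(1) finite_subset by blast
      have "b \<notin> S" using S(1) bA by auto
      then have "(\<Sum>s\<in>insert b S. s) = b + (k - b)" using fS S by simp
      also have "\<dots> = k" using False hb by arith
      finally show ?thesis using S(1) by blast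
    qed
  qed
qed

lemma finite_divisors: "x > 0 \<Longrightarrow> finite (divisors_of x)"
proof -
  assume "x > 0"
  then have "divisors_of x \<subseteq> {..x}" unfolding divisors_of_def by (auto intro: dvd_imp_le)
  then show ?thesis using finite_subset by blast
qed

lemma sigma_mono: "x dvd y \<Longrightarrow> y > 0 \<Longrightarrow> sigma x \<le> sigma y"
proof -
  assume "x dvd y" "y > 0"
  then have "divisors_of x \<subseteq> divisors_of y" unfolding divisors_of_def by (auto intro: dvd_trans)
  then show ?thesis unfolding sigma_def using finite_divisors[OF \<open>y>0\<close>] by (intro sum_mono2) auto
qed

lemma sigma_ge: "x > 0 \<Longrightarrow> x \<le> sigma x"
proof -
  assume "x > 0"
  then have "x \<in> divisors_of x" unfolding divisors_of_def by auto
  then show ?thesis unfolding sigma_def using finite_divisors[OF \<open>x>0\<close>] by (intro member_le_sum) auto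
qed

lemma practical_complete:
  assumes "practical x" "k \<le> sigma x"
  shows "\<exists>S\<subseteq>divisors_of x. (\<Sum>s\<in>S. s) = k"
proof -
  have x0: "x > 0" using assms(1) unfolding practical_def by auto
  have fin: "finite (divisors_of x)" using finite_divisors[OF x0] .
  have "\<forall>a\<in>divisors_of x. a \<le> 1 + (\<Sum>b\<in>{b\<in>divisors_of x. b<a}. b)"
  proof
    fix a assume a: "a \<in> divisors_of x"
    show "a \<le> 1 + (\<Sum>b\<in>{b\<in>divisors_of x. b<a}. b)"
    proof (cases "a \<le> 1")
      case True then show ?thesis by simp
    next
      case False
      have "a \<le> x" using a x0 unfolding divisors_of_def by (auto intro: dvd_imp_le)
      then have "a - 1 \<in> {1..x}" using False by auto
      then obtain S where S: "S \<subseteq> divisors_of x" "(\<Sum>s\<in>S. s) = a - 1"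
        using assms(1) unfolding practical_def by blast
      have fS: "finite S" using S(1) fin finite_subset by blast
      have "S \<subseteq> {b\<in>divisors_of x. b<a}"
      proof
        fix t assume t: "t \<in> S"
        have "t \<le> (\<Sum>s\<in>S. s)" using fS t by (intro member_le_sum) auto
        then show "t \<in> {b\<in>divisors_of x. b<a}" using t S False by auto
      qed
      then have "(\<Sum>s\<in>S. s) \<le> (\<Sum>b\<in>{b\<in>divisors_of x. b<a}. b)"
        using fin by (intro sum_mono2) auto
      then show ?thesis using S(2) by arith
    qed
  qed
  then show ?thesis using complete_set[OF fin] assms(2) unfolding sigma_def by blast
qed

lemma practical_rep:
  assumes "practical x" "k \<le> x"
  shows "\<exists>S\<subseteq>divisors_of x. (\<Sum>s\<in>S. s) = k"
proof (cases "k = 0")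
  case True then show ?thesis by (intro exI[of _ "{}"]) auto
next
  case False then show ?thesis using assms unfolding practical_def by auto
qed

lemma practical_mult_prime:
  assumes px: "practical x" and q: "prime (q::nat)" and qle: "q \<le> sigma x + 1"
  shows "practical (x * q)"
proof -
  have x0: "x > 0" using px unfolding practical_def by auto
  have q0: "q > 0" using q prime_gt_0_nat by blast
  have fin: "finite (divisors_of x)" using finite_divisors[OF x0] .
  show ?thesis unfolding practical_def
  proof (intro conjI ballI)
    show "x * q > 0" using x0 q0 by simp
  next
    fix k assume k: "k \<in> {1..x*q}"
    define u where "u = k div q"
    define v where "v = k mod q"
    have kuv: "k = q * u + v" unfolding u_def v_def by simp
    have "q * u \<le> x * q" using kuv k by (simp only: atLeastAtMost_iff) linarith
    then have "q * u \<le> q * x" by (simp add: mult.commute)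
    then have "u \<le> x" using q0 by (simp add: mult_le_cancel1)
    then obtain S1 where S1: "S1 \<subseteq> divisors_of x" "(\<Sum>s\<in>S1. s) = u"
      using practical_rep[OF px] by blast
    have vq: "v < q" unfolding v_def using q0 by simp
    have "\<exists>S2\<subseteq>divisors_of x. (\<Sum>s\<in>S2. s) = v \<and> (\<forall>t\<in>S2. \<not> q dvd t)"
    proof (cases "q dvd x")
      case True
      then have "q \<le> x" using x0 by (simp add: dvd_imp_le)
      then obtain S2 where S2: "S2 \<subseteq> divisors_of x" "(\<Sum>s\<in>S2. s) = v"
        using practical_rep[OF px, of v] vq by auto
      have fS: "finite S2" using S2(1) fin finite_subset by blast
      have "\<forall>t\<in>S2. \<not> q dvd t"
      proof
        fix t assume t: "t \<in> S2"
        have "t \<le> v" using member_le_sum[of t S2 "\<lambda>x. x", OF t _ fS] S2(2) by simp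
        moreover have "t > 0" using t S2(1) unfolding divisors_of_def by auto
        ultimately show "\<not> q dvd t" using vq by (meson dvd_imp_le leD order_le_less_trans)
      qed
      then show ?thesis using S2 by blast
    next
      case False
      have "v \<le> sigma x" using vq qle by arith
      then obtain S2 where S2: "S2 \<subseteq> divisors_of x" "(\<Sum>s\<in>S2. s) = v"
        using practical_complete[OF px] by blast
      have "\<forall>t\<in>S2. \<not> q dvd t" using S2(1) False unfolding divisors_of_def by (auto intro: dvd_trans)
      then show ?thesis using S2 by blast
    qed
    then obtain S2 where S2: "S2 \<subseteq> divisors_of x" "(\<Sum>s\<in>S2. s) = v" "\<forall>t\<in>S2. \<not> q dvd t" by blast
    define S where "S = (\<lambda>s. q * s) ` S1 \<union> S2"
    have fS1: "finite S1" using S1(1) fin finite_subset by blast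
    have fS2: "finite S2" using S2(1) fin finite_subset by blast
    have disj: "(\<lambda>s. q * s) ` S1 \<inter> S2 = {}" using S2(3) by auto
    have inj: "inj_on (\<lambda>s. q * s) S1" using q0 by (auto simp: inj_on_def)
    have "(\<Sum>s\<in>S. s) = (\<Sum>s\<in>(\<lambda>s. q * s) ` S1. s) + (\<Sum>s\<in>S2. s)"
      unfolding S_def using disj fS1 fS2 by (intro sum.union_disjoint) auto
    also have "(\<Sum>s\<in>(\<lambda>s. q * s) ` S1. s) = (\<Sum>s\<in>S1. q * s)"
      using sum.reindex[OF inj] by simp
    also have "\<dots> = q * u" using S1(2) sum_distrib_left[of q "\<lambda>s. s" S1] by simp
    finally have "(\<Sum>s\<in>S. s) = k" using S2(2) kuv by simp
    moreover have "S \<subseteq> divisors_of (x * q)"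
      using S1(1) S2(1) q0 unfolding S_def divisors_of_def by (auto intro: dvd_trans)
    ultimately show "\<exists>S. S \<subseteq> divisors_of (x * q) \<and> (\<Sum>k\<in>S. k) = k" by blast
  qed
qed

lemma practical_mult_small:
  assumes px: "practical x"
  shows "s \<ge> 1 \<Longrightarrow> s \<le> x + 1 \<Longrightarrow> practical (x * s)"
proof (induction s rule: less_induct)
  case (less s)
  show ?case
  proof (cases "s = 1")
    case True then show ?thesis using px by simp
  next
    case False
    then obtain q where q: "prime q" "q dvd s" using prime_factor_nat less.prems by (metis)
    then obtain t where t: "s = q * t" by blast
    have t1: "t \<ge> 1" using t less.prems by (cases t) auto
    have q1: "q > 1" using q(1) prime_gt_1_nat by blast
    have "t * 1 < t * q" using q1 t1 by (intro mult_strict_left_mono) auto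
    then have "t < s" using t by (simp add: mult.commute)
    then have ptx: "practical (x * t)" using less.IH[of t] t1 less.prems by auto
    have x0: "x > 0" using px unfolding practical_def by auto
    have "q \<le> s" using q less.prems by (simp add: dvd_imp_le)
    also have "\<dots> \<le> x * t + 1" proof -
      have "x \<le> x * t" using t1 by simp
      then show ?thesis using less.prems(2) by linarith
    qed
    also have "\<dots> \<le> sigma (x * t) + 1" using sigma_ge[of "x*t"] x0 t1 by simp
    finally have "practical (x * t * q)" using practical_mult_prime[OF ptx q(1)] by blast
    then show ?thesis using t by (simp add: mult.commute mult.left_commute)
  qed
qed



lemma part_bc:
  fixes a b d m n :: nat
  assumes a0: "a > 0" and b0: "b > 0" and pd: "practical d" and dg: "d dvd gcd a b"
    and maxd: "\<forall>y. practical y \<and> y dvd gcd a b \<longrightarrow> y \<le> d"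
    and H: "\<forall>p. prime p \<and> p \<le> sigma d + 1 \<longrightarrow> p dvd (a div d)"
    and pm: "practical m" and mdef: "m = a * n + b" and n1: "n \<ge> 1"
  shows False
proof -
  have d0: "d > 0" using pd unfolding practical_def by auto
  have m0: "m > 0" using pm unfolding practical_def by auto
  have g0: "gcd a b > 0" using a0 by simp
  have "d \<le> gcd a b" using dg g0 by (simp add: dvd_imp_le)
  also have "gcd a b \<le> b" using b0 by (simp add: dvd_imp_le)
  also have "b < m" using mdef n1 a0 by (simp add: nat_0_less_mult_iff)
  finally have dm: "d < m" .
  have dvdm: "d dvd m" using dg mdef by (metis dvd_add dvd_mult2 gcd_dvd1 gcd_dvd2 dvd_trans)
  have "\<exists>p. prime p \<and> multiplicity p d < multiplicity p m"
  proof (rule ccontr)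
    assume "\<not> ?thesis"
    then have "m dvd d" using m0 by (intro multiplicity_le_imp_dvd) (auto simp: not_less)
    then show False using dm d0 by (simp add: dvd_imp_le leD)
  qed
  define r where "r = (LEAST p. prime p \<and> multiplicity p d < multiplicity p m)"
  have r: "prime r" "multiplicity r d < multiplicity r m"
    using LeastI_ex[OF \<open>\<exists>p. _\<close>] unfolding r_def by auto
  have rmin: "\<And>p. prime p \<Longrightarrow> p < r \<Longrightarrow> multiplicity p m \<le> multiplicity p d"
    using not_less_Least unfolding r_def by (metis not_less)
  have rm: "r dvd m"
  proof (rule ccontr)
    assume "\<not> r dvd m"
    then have "multiplicity r m = 0" by (rule not_dvd_imp_multiplicity_0)
    then show False using r(2) by simp
  qed
  have r2: "r \<ge> 2" using r(1) prime_ge_2_nat by blast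
  have "r \<le> m" using rm m0 by (simp add: dvd_imp_le)
  then have "r - 1 \<in> {1..m}" using r2 by auto
  then obtain S where S: "S \<subseteq> divisors_of m" "(\<Sum>s\<in>S. s) = r - 1"
    using pm unfolding practical_def by blast
  have fm: "finite (divisors_of m)" using finite_divisors[OF m0] .
  have fS: "finite S" using S(1) fm finite_subset by blast
  have "S \<subseteq> divisors_of d"
  proof
    fix t assume t: "t \<in> S"
    have tle: "t \<le> r - 1" using member_le_sum[of t S "\<lambda>x. x", OF t _ fS] S(2) by simp
    have t0: "t > 0" and tm: "t dvd m" using t S(1) unfolding divisors_of_def by auto
    have "t dvd d"
    proof (rule multiplicity_le_imp_dvd)
      show "t \<noteq> 0" using t0 by simp
    next
      fix p :: nat assume p: "prime p"
      show "multiplicity p t \<le> multiplicity p d"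
      proof (cases "p dvd t")
        case True
        then have "p \<le> t" using t0 by (simp add: dvd_imp_le)
        then have "p < r" using tle r2 by arith
        then have "multiplicity p m \<le> multiplicity p d" using rmin p by blast
        moreover have "multiplicity p t \<le> multiplicity p m"
          using tm m0 by (intro dvd_imp_multiplicity_le) auto
        ultimately show ?thesis by simp
      next
        case False
        then show ?thesis by (simp add: not_dvd_imp_multiplicity_0)
      qed
    qed
    then show "t \<in> divisors_of d" using t0 unfolding divisors_of_def by auto
  qed
  then have "(\<Sum>s\<in>S. s) \<le> sigma d" unfolding sigma_def
    using finite_divisors[OF d0] by (intro sum_mono2) auto
  then have rle: "r \<le> sigma d + 1" using S(2) by arith
  then have rad: "r dvd a div d" using H r(1) by blast
  show False
  proof (cases "multiplicity r d < multiplicity r (gcd a b)")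
    case True
    note lt = True
    have "d * r dvd gcd a b"
    proof (rule multiplicity_le_imp_dvd)
      show "d * r \<noteq> 0" using d0 r2 by simp
    next
      fix p :: nat assume p: "prime p"
      have mdr: "multiplicity p (d * r) = multiplicity p d + multiplicity p r"
        using p d0 r2 by (intro prime_elem_multiplicity_mult_distrib) auto
      show "multiplicity p (d * r) \<le> multiplicity p (gcd a b)"
      proof (cases "p = r")
        case True
        then show ?thesis using mdr lt r(1) by simp
      next
        case False
        then have "multiplicity p r = 0" using p r(1) by (simp add: prime_multiplicity_other)
        moreover have "multiplicity p d \<le> multiplicity p (gcd a b)"
          using dg g0 by (intro dvd_imp_multiplicity_le) auto
        ultimately show ?thesis using mdr by simp
      qed
    qed
    moreover have "practical (d * r)" using practical_mult_prime[OF pd r(1) rle] .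
    ultimately have "d * r \<le> d" using maxd by blast
    then show False using d0 r2 by simp
  next
    case False
    define k where "k = multiplicity r d"
    have "r ^ k dvd d" unfolding k_def by (rule multiplicity_dvd)
    moreover obtain a' where a': "a = d * a'" using dg by (metis dvd_trans gcd_dvd1 dvdE)
    moreover have "r dvd a'" using rad a' d0 by simp
    ultimately have "r ^ k * r dvd d * a'" by (intro mult_dvd_mono)
    then have ra: "r ^ Suc k dvd a" using a' by (simp add: mult.commute)
    have nrb: "\<not> r ^ Suc k dvd b"
    proof
      assume "r ^ Suc k dvd b"
      then have "r ^ Suc k dvd gcd a b" using ra by simp
      then have "Suc k \<le> multiplicity r (gcd a b)" using g0 r2
        by (subst (asm) power_dvd_iff_le_multiplicity) auto
      then show False using False unfolding k_def by simp
    qed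
    have "Suc k \<le> multiplicity r m" using r(2) unfolding k_def by simp
    then have "r ^ Suc k dvd m" by (rule multiplicity_dvd')
    moreover have "r ^ Suc k dvd a * n" using ra by simp
    ultimately have "r ^ Suc k dvd b" using mdef by (simp add: dvd_add_right_iff)
    then show False using nrb by simp
  qed
qed



lemma practical_d_ppow:
  assumes pd: "practical d" and p: "prime p" and ple: "p \<le> sigma d + 1"
  shows "practical (d * p ^ Suc e)"
proof (induction e)
  case 0
  then show ?case using practical_mult_prime[OF pd p ple] by simp
next
  case (Suc e)
  have d0: "d > 0" using pd unfolding practical_def by auto
  have p0: "p > 0" using p prime_gt_0_nat by blast
  have "p \<le> p ^ Suc e" using p0 by (simp add: self_le_power)
  also have "\<dots> \<le> d * p ^ Suc e" using d0 by simp
  also have "\<dots> \<le> sigma (d * p ^ Suc e)" using d0 p0 by (intro sigma_ge) simp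
  finally have ple2: "p \<le> sigma (d * p ^ Suc e) + 1" by simp
  have eq: "d * p ^ Suc (Suc e) = d * p ^ Suc e * p" by (simp add: mult_ac)
  from practical_mult_prime[OF Suc.IH p ple2] show ?case by (subst eq)
qed

lemma part_a:
  fixes a b d p :: nat
  assumes a0: "a > 0" and b0: "b > 0" and pd: "practical d" and dg: "d dvd gcd a b"
    and p: "prime p" and ple: "p \<le> sigma d + 1" and pnd: "\<not> p dvd (a div d)"
  shows "infinite {m. practical m \<and> (\<exists>n::nat. m = a * n + b)}"
proof -
  have d0: "d > 0" using pd unfolding practical_def by auto
  define a' where "a' = a div d"
  define b' where "b' = b div d"
  have a': "a = d * a'" unfolding a'_def using dg by (metis dvd_mult_div_cancel dvd_trans gcd_dvd1)
  have b': "b = d * b'" unfolding b'_def using dg by (metis dvd_mult_div_cancel dvd_trans gcd_dvd2)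
  have a'0: "a' > 0" using a' a0 by (cases a') auto
  have cop: "coprime p a'" using p pnd unfolding a'_def by (rule prime_imp_coprime)
  define \<phi> where "\<phi> = totient a'"
  have phi0: "\<phi> > 0" unfolding \<phi>_def using a'0 by simp
  have eul: "[p ^ \<phi> = 1] (mod a')" unfolding \<phi>_def using euler_theorem[OF cop] .
  have p2: "p \<ge> 2" using p prime_ge_2_nat by blast
  show ?thesis unfolding infinite_nat_iff_unbounded_le
  proof
    fix B
    define K where "K = Suc (B + a' + b)"
    define e where "e = \<phi> * K"
    have eK: "e \<ge> K" unfolding e_def using phi0 by simp
    then have e1: "e \<ge> 1" unfolding K_def by simp
    have "K \<le> e" by (rule eK)
    also have "e < 2 ^ e" by (rule less_exp)
    also have "\<dots> \<le> p ^ e" using p2 by (simp add: power_mono)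
    finally have Kp: "K < p ^ e" .
    have econg: "[p ^ e = 1] (mod a')" unfolding e_def
      using cong_pow[OF eul, of K] by (simp add: power_mult)
    define s0 where "s0 = b' mod a'"
    define s where "s = (if s0 = 0 then a' else s0)"
    have s1: "s \<ge> 1" and sa: "s \<le> a'" unfolding s_def s0_def using a'0
      by (auto simp: less_imp_le)
    have scong: "[s = b'] (mod a')" unfolding s_def s0_def cong_def by auto
    define x where "x = d * p ^ e"
    have px: "practical x" unfolding x_def using practical_d_ppow[OF pd p ple, of "e - 1"] e1 by simp
    have "p ^ e \<le> x" unfolding x_def using d0 by simp
    then have "s \<le> x + 1" using sa Kp unfolding K_def by simp
    then have pm: "practical (x * s)" using practical_mult_small[OF px s1] by blast
    have "[p ^ e * s = 1 * b'] (mod a')" using cong_mult[OF econg scong] .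
    then have "(p ^ e * s) mod a' = b' mod a'" unfolding cong_def by simp
    then have "(d * (p ^ e * s)) mod (d * a') = (d * b') mod (d * a')" by (simp add: mod_mult_mult1)
    then have mc: "(x * s) mod a = b mod a" unfolding x_def using a' b' by (simp add: mult.assoc)
    have "p ^ e \<le> p ^ e * s" using s1 by simp
    also have "\<dots> \<le> x * s" unfolding x_def using d0 by simp
    finally have pes: "p ^ e \<le> x * s" .
    then have bm: "b \<le> x * s" using Kp unfolding K_def by simp
    then have "a dvd x * s - b" using mc mod_eq_dvd_iff_nat by blast
    then obtain n where n: "x * s - b = a * n" by blast
    then have "x * s = a * n + b" using bm by simp
    moreover have "B \<le> x * s" using pes Kp unfolding K_def by simp
    ultimately show "\<exists>m\<ge>B. m \<in> {m. practical m \<and> (\<exists>n::nat. m = a * n + b)}"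
      using pm by blast
  qed
qed


lemma practical_one: "practical 1"
  unfolding practical_def divisors_of_def by (auto intro!: exI[of _ "{1}"])

theorem theorem2p2:
  fixes a b :: nat
  assumes "a > 0" and "b > 0"
  defines "d \<equiv> largest_practical_dvd (gcd a b)"
  shows "((\<exists>p. prime p \<and> p \<le> sigma d + 1 \<and> \<not> p dvd (a div d))
           \<longrightarrow> infinite {m. practical m \<and> (\<exists>n::nat. m = a * n + b)})
       \<and> ((practical b \<and> (\<forall>p. prime p \<and> p \<le> sigma d + 1 \<longrightarrow> p dvd (a div d)))
           \<longrightarrow> {m. practical m \<and> (\<exists>n::nat. m = a * n + b)} = {b})
       \<and> ((\<not> practical b \<and> (\<forall>p. prime p \<and> p \<le> sigma d + 1 \<longrightarrow> p dvd (a div d)))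
           \<longrightarrow> {m. practical m \<and> (\<exists>n::nat. m = a * n + b)} = {})"
proof -
  have g0: "gcd a b > 0" using assms(1) by simp
  have Q1: "practical 1 \<and> 1 dvd gcd a b" using practical_one by simp
  have bnd: "\<forall>y. practical y \<and> y dvd gcd a b \<longrightarrow> y \<le> gcd a b"
    using g0 by (auto intro: dvd_imp_le)
  have hd: "practical d \<and> d dvd gcd a b"
    unfolding d_def largest_practical_dvd_def by (rule GreatestI_nat[of _ 1 "gcd a b"]) (use Q1 bnd in auto)
  have maxd: "\<forall>y. practical y \<and> y dvd gcd a b \<longrightarrow> y \<le> d"
    unfolding d_def largest_practical_dvd_def using bnd by (auto intro: Greatest_le_nat[of _ _ "gcd a b"])
  have bc: "\<And>m n. \<forall>p. prime p \<and> p \<le> sigma d + 1 \<longrightarrow> p dvd (a div d) \<Longrightarrow> practical m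
      \<Longrightarrow> m = a * n + b \<Longrightarrow> n = 0"
  proof (rule ccontr)
    fix m n assume H: "\<forall>p. prime p \<and> p \<le> sigma d + 1 \<longrightarrow> p dvd (a div d)"
      and pm: "practical m" and mdef: "m = a * n + b" and "n \<noteq> 0"
    then have "n \<ge> 1" by simp
    show False using part_bc[OF assms(1,2) hd[THEN conjunct1] hd[THEN conjunct2] maxd H pm mdef \<open>n \<ge> 1\<close>] .
  qed
  show ?thesis
  proof (intro conjI impI)
    assume "\<exists>p. prime p \<and> p \<le> sigma d + 1 \<and> \<not> p dvd (a div d)"
    then obtain p where "prime p" "p \<le> sigma d + 1" "\<not> p dvd (a div d)" by blast
    then show "infinite {m. practical m \<and> (\<exists>n::nat. m = a * n + b)}"
      using part_a[OF assms(1,2) hd[THEN conjunct1] hd[THEN conjunct2]] by blast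
  next
    assume A: "practical b \<and> (\<forall>p. prime p \<and> p \<le> sigma d + 1 \<longrightarrow> p dvd (a div d))"
    show "{m. practical m \<and> (\<exists>n::nat. m = a * n + b)} = {b}"
    proof
      show "{m. practical m \<and> (\<exists>n::nat. m = a * n + b)} \<subseteq> {b}"
      proof
        fix m assume "m \<in> {m. practical m \<and> (\<exists>n::nat. m = a * n + b)}"
        then obtain n where m: "practical m" "m = a * n + b" by blast
        then have "n = 0" using bc A by blast
        then show "m \<in> {b}" using m by simp
      qed
      have "b = a * 0 + b" by simp
      then show "{b} \<subseteq> {m. practical m \<and> (\<exists>n::nat. m = a * n + b)}"
        using A by blast
    qed
  next
    assume A: "\<not> practical b \<and> (\<forall>p. prime p \<and> p \<le> sigma d + 1 \<longrightarrow> p dvd (a div d))"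
    show "{m. practical m \<and> (\<exists>n::nat. m = a * n + b)} = {}"
    proof (rule ccontr)
      assume "{m. practical m \<and> (\<exists>n::nat. m = a * n + b)} \<noteq> {}"
      then obtain m n where m: "practical m" "m = a * n + b" by blast
      then have "n = 0" using bc A by blast
      then show False using m A by simp
    qed
  qed
qed

end
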